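(* Fix an integer $\delta>0$. There is $n(\delta)$ such that for all $n\ge n(\delta)$, among all $n$-vertex graphs with minimum degree at least $\delta$, the unique graph with the most independent sets is $K_{\delta,n-\delta}$.
   Context: Graphs are simple, loopless and finite; the number of independent sets includes the empty set. $K_{a,b}$ is the complete bipartite graph with $a$ vertices in one part and $b$ in the other. *)

theory Defs
  imports Main
begin

definition simple_graph :: "'a set \<Rightarrow> 'a set set \<Rightarrow> bool" where
  "simple_graph V E \<longleftrightarrow> finite V \<and> (\<forall>e\<in>E. e \<subseteq> V \<and> card e = 2)"

definition degree :: "'a set set \<Rightarrow> 'a \<Rightarrow> nat" where
  "degree E v = card {u. {u, v} \<in> E}"

definition min_degree_ge :: "'a set \<Rightarrow> 'a set set \<Rightarrow> nat \<Rightarrow> bool" where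
  "min_degree_ge V E d \<longleftrightarrow> (\<forall>v\<in>V. d \<le> degree E v)"

definition independent_set :: "'a set \<Rightarrow> 'a set set \<Rightarrow> 'a set \<Rightarrow> bool" where
  "independent_set V E I \<longleftrightarrow> I \<subseteq> V \<and> (\<forall>e\<in>E. \<not> e \<subseteq> I)"

text \<open>Number of independent sets (the empty set included).\<close>
definition num_indep_sets :: "'a set \<Rightarrow> 'a set set \<Rightarrow> nat" where
  "num_indep_sets V E = card {I. independent_set V E I}"

definition is_complete_bipartite :: "'a set \<Rightarrow> 'a set set \<Rightarrow> nat \<Rightarrow> nat \<Rightarrow> bool" where
  "is_complete_bipartite V E a b \<longleftrightarrow>
     (\<exists>A B. A \<inter> B = {} \<and> A \<union> B = V \<and> card A = a \<and> card B = b \<and>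
            E = {{x, y} | x y. x \<in> A \<and> y \<in> B})"

end

theory Submission
  imports Defs
begin

definition nb :: "'a set set \<Rightarrow> 'a set \<Rightarrow> 'a set" where
  "nb E J = {y. \<exists>x\<in>J. {x, y} \<in> E}"

lemma indep_mono: "independent_set V E I \<Longrightarrow> J \<subseteq> I \<Longrightarrow> independent_set V E J"
  unfolding independent_set_def by (meson subset_trans)

lemma edge_form:
  assumes "simple_graph V E" "e \<in> E"
  shows "\<exists>a b. a \<noteq> b \<and> e = {a,b} \<and> a \<in> V \<and> b \<in> V"
proof -
  have "card e = 2" "e \<subseteq> V" using assms by (auto simp: simple_graph_def)
  then show ?thesis by (auto simp: card_2_iff)
qed

lemma indep_iff:
  assumes "simple_graph V E"
  shows "independent_set V E I \<longleftrightarrow> I \<subseteq> V \<and> (\<forall>a\<in>I. \<forall>b\<in>I. {a,b} \<notin> E)"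
proof
  assume "independent_set V E I" then show "I \<subseteq> V \<and> (\<forall>a\<in>I. \<forall>b\<in>I. {a,b} \<notin> E)"
    by (auto simp: independent_set_def)
next
  assume h: "I \<subseteq> V \<and> (\<forall>a\<in>I. \<forall>b\<in>I. {a,b} \<notin> E)"
  show "independent_set V E I" unfolding independent_set_def
  proof (intro conjI ballI)
    show "I \<subseteq> V" using h by simp
    fix e assume "e \<in> E"
    then obtain a b where "e = {a,b}" using edge_form[OF assms] by blast
    then show "\<not> e \<subseteq> I" using h \<open>e \<in> E\<close> by auto
  qed
qed

lemma nbr_out:
  assumes "simple_graph V E" "independent_set V E S" "s \<in> S"
  shows "{u. {u,s} \<in> E} \<subseteq> V - S"
proof
  fix u assume "u \<in> {u. {u,s} \<in> E}"
  then have e: "{u,s} \<in> E" by simp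
  then have "u \<in> V" using assms(1) by (auto simp: simple_graph_def)
  moreover have "u \<notin> S" using e assms(2,3) by (auto simp: independent_set_def)
  ultimately show "u \<in> V - S" by simp
qed

lemma swap_indep:
  assumes sg: "simple_graph V E" and S: "independent_set V E S" and J: "J \<subseteq> V - S"
    and Ji: "independent_set V E J"
  shows "independent_set V E ((S - nb E J) \<union> J)"
  unfolding indep_iff[OF sg]
proof (intro conjI ballI)
  show "S - nb E J \<union> J \<subseteq> V" using S J by (auto simp: independent_set_def)
  fix a b assume a: "a \<in> S - nb E J \<union> J" and b: "b \<in> S - nb E J \<union> J"
  show "{a,b} \<notin> E"
  proof
    assume ab: "{a,b} \<in> E"
    have sS: "\<forall>a\<in>S. \<forall>b\<in>S. {a,b} \<notin> E" using S indep_iff[OF sg] by blast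
    have sJ: "\<forall>a\<in>J. \<forall>b\<in>J. {a,b} \<notin> E" using Ji indep_iff[OF sg] by blast
    show False
    proof (cases "a \<in> J")
      case True
      then show ?thesis
      proof (cases "b \<in> J")
        case True then show ?thesis using sJ ab \<open>a \<in> J\<close> by blast
      next
        case False then have "b \<in> S - nb E J" using b by blast
        then show ?thesis using ab \<open>a \<in> J\<close> by (auto simp: nb_def)
      qed
    next
      case False then have aS: "a \<in> S - nb E J" using a by blast
      show ?thesis
      proof (cases "b \<in> J")
        case True
        have "{b,a} \<in> E" using ab by (simp add: insert_commute)
        then show ?thesis using aS True by (auto simp: nb_def)
      next
        case False then have "b \<in> S - nb E J" using b by blast
        then show ?thesis using sS ab aS by blast
      qed
    qed
  qed
qed

lemma count_bound:
  assumes sg: "simple_graph V E" and S: "independent_set V E S"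
  shows "num_indep_sets V E \<le> (\<Sum>J\<in>{J. J \<subseteq> V - S \<and> independent_set V E J}. 2 ^ card (S - nb E J))"
proof -
  let ?J = "{J. J \<subseteq> V - S \<and> independent_set V E J}"
  have fV: "finite V" using sg by (simp add: simple_graph_def)
  have SV: "S \<subseteq> V" using S by (simp add: independent_set_def)
  have fJ: "finite ?J" by (rule finite_subset[of _ "Pow V"]) (use fV in auto)
  have sub: "{I. independent_set V E I} \<subseteq> (\<Union>J\<in>?J. (\<lambda>K. J \<union> K) ` Pow (S - nb E J))"
  proof
    fix I assume "I \<in> {I. independent_set V E I}"
    then have I: "independent_set V E I" by simp
    have IV: "I \<subseteq> V" using I by (simp add: independent_set_def)
    have J: "I \<inter> (V - S) \<in> ?J" using I indep_mono by blast
    have "I \<inter> S \<subseteq> S - nb E (I \<inter> (V - S))"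
    proof
      fix y assume y: "y \<in> I \<inter> S"
      show "y \<in> S - nb E (I \<inter> (V - S))"
      proof (rule ccontr)
        assume "y \<notin> S - nb E (I \<inter> (V - S))"
        then obtain x where "x \<in> I" "{x,y} \<in> E" using y by (auto simp: nb_def)
        then show False using I y indep_iff[OF sg] by blast
      qed
    qed
    moreover have "I = I \<inter> (V - S) \<union> I \<inter> S" using IV by blast
    ultimately show "I \<in> (\<Union>J\<in>?J. (\<lambda>K. J \<union> K) ` Pow (S - nb E J))" using J by blast
  qed
  have "num_indep_sets V E \<le> card (\<Union>J\<in>?J. (\<lambda>K. J \<union> K) ` Pow (S - nb E J))"
    unfolding num_indep_sets_def
    by (rule card_mono[OF _ sub]) (use fJ SV fV in \<open>auto intro!: finite_imageI finite_subset[of _ V]\<close>)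
  also have "\<dots> \<le> (\<Sum>J\<in>?J. card ((\<lambda>K. J \<union> K) ` Pow (S - nb E J)))"
    by (rule card_UN_le[OF fJ])
  also have "\<dots> \<le> (\<Sum>J\<in>?J. 2 ^ card (S - nb E J))"
  proof (rule sum_mono)
    fix J assume "J \<in> ?J"
    have "finite (S - nb E J)" using SV fV finite_subset by blast
    then show "card ((\<lambda>K. J \<union> K) ` Pow (S - nb E J)) \<le> 2 ^ card (S - nb E J)"
      using card_image_le card_Pow by (metis finite_Pow_iff)
  qed
  finally show ?thesis .
qed

lemma sum3: "finite T \<Longrightarrow> (\<Sum>J\<in>Pow T. (2::nat) ^ (card T - card J)) = 3 ^ card T"
proof (induction T rule: finite_induct)
  case empty then show ?case by simp
next
  case (insert a T)
  have fP: "finite (Pow T)" using insert by simp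
  have dis: "Pow T \<inter> insert a ` Pow T = {}" using insert by auto
  have inj: "inj_on (insert a) (Pow T)" unfolding inj_on_def
  proof (intro ballI impI)
    fix x y assume "x \<in> Pow T" "y \<in> Pow T" "insert a x = insert a y"
    then show "x = y" using insert(2) by (metis PowD in_mono insert_ident)
  qed
  have cJ: "\<And>J. J \<in> Pow T \<Longrightarrow> card J \<le> card T" using insert card_mono by blast
  have "(\<Sum>J\<in>Pow (insert a T). (2::nat) ^ (card (insert a T) - card J))
     = (\<Sum>J\<in>Pow T. 2 ^ (card (insert a T) - card J)) + (\<Sum>J\<in>insert a ` Pow T. 2 ^ (card (insert a T) - card J))"
    unfolding Pow_insert by (rule sum.union_disjoint) (use fP dis in auto)
  also have "(\<Sum>J\<in>insert a ` Pow T. (2::nat) ^ (card (insert a T) - card J)) = (\<Sum>J\<in>Pow T. 2 ^ (card (insert a T) - card (insert a J)))"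
    by (rule sum.reindex[OF inj, unfolded comp_def])
  also have "\<dots> = (\<Sum>J\<in>Pow T. 2 ^ (card T - card J))"
  proof (rule sum.cong[OF refl])
    fix J assume "J \<in> Pow T"
    then have "a \<notin> J" "finite J" using insert finite_subset by auto
    then show "(2::nat) ^ (card (insert a T) - card (insert a J)) = 2 ^ (card T - card J)"
      using insert by simp
  qed
  also have "(\<Sum>J\<in>Pow T. (2::nat) ^ (card (insert a T) - card J)) = (\<Sum>J\<in>Pow T. 2 * 2 ^ (card T - card J))"
  proof (rule sum.cong[OF refl])
    fix J assume J: "J \<in> Pow T"
    then have "card (insert a T) - card J = Suc (card T - card J)" using insert cJ[OF J] by simp
    then show "(2::nat) ^ (card (insert a T) - card J) = 2 * 2 ^ (card T - card J)" by simp
  qed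
  finally show ?case using insert by (simp add: sum_distrib_left[symmetric])
qed

lemma bip_lower:
  assumes fV: "finite V" and H: "is_complete_bipartite V H a b"
  shows "2 ^ b + 2 ^ a - 1 \<le> num_indep_sets V H"
proof -
  obtain A B where AB: "A \<inter> B = {}" "A \<union> B = V" "card A = a" "card B = b"
    "H = {{x, y} | x y. x \<in> A \<and> y \<in> B}" using H unfolding is_complete_bipartite_def by blast
  have fA: "finite A" and fB: "finite B" using AB fV by auto
  have sub: "Pow B \<union> (Pow A - {{}}) \<subseteq> {I. independent_set V H I}"
  proof
    fix X assume X: "X \<in> Pow B \<union> (Pow A - {{}})"
    show "X \<in> {I. independent_set V H I}" unfolding independent_set_def mem_Collect_eq
    proof (intro conjI ballI)
      show "X \<subseteq> V" using X AB by auto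
      fix e assume "e \<in> H"
      then obtain x y where "e = {x,y}" "x \<in> A" "y \<in> B" using AB by blast
      then show "\<not> e \<subseteq> X" using X AB by auto
    qed
  qed
  have fI: "finite {I. independent_set V H I}"
    by (rule finite_subset[of _ "Pow V"]) (use fV in \<open>auto simp: independent_set_def\<close>)
  have "card (Pow B \<union> (Pow A - {{}})) = card (Pow B) + card (Pow A - {{}})"
    by (rule card_Un_disjoint) (use fA fB AB in auto)
  also have "\<dots> = 2 ^ b + (2 ^ a - 1)" using fA fB AB by (simp add: card_Pow)
  finally have "card (Pow B \<union> (Pow A - {{}})) = 2 ^ b + 2 ^ a - 1" by simp
  moreover have "card (Pow B \<union> (Pow A - {{}})) \<le> num_indep_sets V H"
    unfolding num_indep_sets_def by (rule card_mono[OF fI sub])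
  ultimately show ?thesis by simp
qed

lemma bip_exists:
  assumes "0 < d" "2 * d \<le> n"
  shows "\<exists>E. simple_graph {0..<n} E \<and> min_degree_ge {0..<n} E d \<and>
          is_complete_bipartite {0..<n} E d (n - d)"
proof -
  define A where "A = {0..<d}"
  define B where "B = {d..<n}"
  define E where "E = {{x, y} | x y. x \<in> A \<and> y \<in> B}"
  have sg: "simple_graph {0..<n} E" unfolding simple_graph_def E_def A_def B_def
    by auto
  have degA: "{u. {u, v} \<in> E} = B" if "v \<in> A" for v
  proof
    show "{u. {u, v} \<in> E} \<subseteq> B"
    proof
      fix u assume "u \<in> {u. {u, v} \<in> E}"
      then obtain x y where "{u,v} = {x,y}" "x \<in> A" "y \<in> B" unfolding E_def by blast
      then show "u \<in> B" using that unfolding A_def B_def by (auto simp: doubleton_eq_iff)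
    qed
    show "B \<subseteq> {u. {u, v} \<in> E}" using that unfolding E_def by (auto simp: insert_commute)
  qed
  have degB: "{u. {u, v} \<in> E} = A" if "v \<in> B" for v
  proof
    show "{u. {u, v} \<in> E} \<subseteq> A"
    proof
      fix u assume "u \<in> {u. {u, v} \<in> E}"
      then obtain x y where "{u,v} = {x,y}" "x \<in> A" "y \<in> B" unfolding E_def by blast
      then show "u \<in> A" using that unfolding A_def B_def by (auto simp: doubleton_eq_iff)
    qed
    show "A \<subseteq> {u. {u, v} \<in> E}" using that unfolding E_def by auto
  qed
  have md: "min_degree_ge {0..<n} E d" unfolding min_degree_ge_def degree_def
  proof
    fix v assume v: "v \<in> {0..<n}"
    show "d \<le> card {u. {u, v} \<in> E}"
    proof (cases "v < d")
      case True then have "v \<in> A" by (simp add: A_def)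
      then show ?thesis using degA assms by (simp add: B_def)
    next
      case False then have "v \<in> B" using v by (simp add: B_def)
      then show ?thesis using degB by (simp add: A_def)
    qed
  qed
  have "is_complete_bipartite {0..<n} E d (n - d)" unfolding is_complete_bipartite_def
    by (rule exI[of _ A], rule exI[of _ B]) (use assms in \<open>auto simp: A_def B_def E_def\<close>)
  then show ?thesis using sg md by blast
qed

lemma key:
  fixes V :: "'a set" and E :: "'a set set"
  assumes sg: "simple_graph V E" and md: "min_degree_ge V E d" and d0: "0 < d"
    and nV: "card V = n" and nN: "9*d^2 + 3*d + 2 \<le> n"
    and nbip: "\<not> is_complete_bipartite V E d (n - d)"
  shows "num_indep_sets V E < 2^(n-d) + 2^d - 1"
proof -
  have fV: "finite V" using sg by (simp add: simple_graph_def)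
  define II where "II = {I. independent_set V E I}"
  have fII: "finite II" unfolding II_def
    by (rule finite_subset[of _ "Pow V"]) (use fV in \<open>auto simp: independent_set_def\<close>)
  have eII: "{} \<in> II" using sg by (fastforce simp: II_def independent_set_def simple_graph_def)
  have fc: "finite (card ` II)" using fII by simp
  have "Max (card ` II) \<in> card ` II" using fc eII by (intro Max_in) auto
  then obtain S where SII: "S \<in> II" and Smx: "card S = Max (card ` II)" by auto
  have S: "independent_set V E S" using SII by (simp add: II_def)
  have Smax: "\<And>I. independent_set V E I \<Longrightarrow> card I \<le> card S"
    using fc Smx by (simp add: II_def)
  have SV: "S \<subseteq> V" using S by (simp add: independent_set_def)
  have fS: "finite S" using SV fV finite_subset by blast
  define T where "T = V - S"
  have fT: "finite T" using fV by (simp add: T_def)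
  define \<alpha> where "\<alpha> = card S"
  define t where "t = card T"
  have nat: "\<alpha> + t = n" unfolding \<alpha>_def t_def T_def nV[symmetric]
    using card_Diff_subset[OF fS SV] card_mono[OF fV SV] by simp
  define c where "c J = card (S - nb E J)" for J
  have swapc: "c J + card J \<le> \<alpha>" if J: "J \<subseteq> T" "independent_set V E J" for J
  proof -
    have "independent_set V E ((S - nb E J) \<union> J)"
      using swap_indep[OF sg S _ J(2)] J(1) by (simp add: T_def)
    then have "card ((S - nb E J) \<union> J) \<le> \<alpha>" using Smax by (simp add: \<alpha>_def)
    moreover have "card ((S - nb E J) \<union> J) = c J + card J"
      unfolding c_def by (rule card_Un_disjoint) (use fS fT J(1) finite_subset in \<open>auto simp: T_def\<close>)
    ultimately show ?thesis by simp
  qed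
  have cle: "c J \<le> \<alpha>" for J unfolding c_def \<alpha>_def by (rule card_mono[OF fS]) auto
  have cmono: "c K \<le> c J" if "J \<subseteq> K" for J K
    unfolding c_def by (rule card_mono) (use fS that in \<open>auto simp: nb_def\<close>)
  have c0: "c {} = \<alpha>" by (simp add: c_def nb_def \<alpha>_def)
  have "n > 0" using nN by simp
  then obtain v where "v \<in> V" using nV by fastforce
  have "independent_set V E {v}" unfolding indep_iff[OF sg]
  proof (intro conjI ballI)
    show "{v} \<subseteq> V" using \<open>v \<in> V\<close> by simp
    fix a b assume "a \<in> {v}" "b \<in> {v}"
    then have "{a,b} = {v}" by simp
    then show "{a,b} \<notin> E" using sg by (auto simp: simple_graph_def)
  qed
  then have "1 \<le> \<alpha>" using Smax[of "{v}"] by (simp add: \<alpha>_def)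
  then obtain s0 where s0: "s0 \<in> S" unfolding \<alpha>_def by (metis card.empty ex_in_conv not_one_le_zero)
  have degS: "d \<le> card {u. {u,s} \<in> E} \<and> {u. {u,s} \<in> E} \<subseteq> T" if "s \<in> S" for s
    using md nbr_out[OF sg S that] that SV by (auto simp: min_degree_ge_def degree_def T_def)
  have dt: "d \<le> t" using degS[OF s0] card_mono[OF fT] unfolding t_def by (meson le_trans)
  define JJ where "JJ = {J. J \<subseteq> T \<and> independent_set V E J}"
  have cnt: "num_indep_sets V E \<le> (\<Sum>J\<in>JJ. 2 ^ c J)"
    using count_bound[OF sg S] by (simp add: JJ_def T_def c_def)
  have JJP: "JJ \<subseteq> Pow T" by (auto simp: JJ_def)
  have fJJ: "finite JJ" using JJP fT finite_subset by blast
  have eJJ: "{} \<in> JJ" using sg by (fastforce simp: JJ_def independent_set_def simple_graph_def)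
  have JJsw: "c J + card J \<le> \<alpha>" if "J \<in> JJ" for J using swapc that by (simp add: JJ_def)
  have nd: "n - d = \<alpha> + (t - d)" using nat dt by simp
  have main: "(\<Sum>J\<in>JJ. (2::nat) ^ c J) < 2^(n-d) + 2^d - 1"
  proof (cases "t = d")
    case True
    have full: "{x,s} \<in> E" if "s \<in> S" "x \<in> T" for s x
    proof -
      have "{u. {u,s} \<in> E} = T"
        using degS[OF that(1)] card_subset_eq[OF fT] True unfolding t_def
        by (metis card_mono fT le_antisym)
      then show ?thesis using that(2) by blast
    qed
    have edgeT: "\<exists>a\<in>T. \<exists>b\<in>T. {a,b} \<in> E"
    proof (rule ccontr)
      assume noT: "\<not> (\<exists>a\<in>T. \<exists>b\<in>T. {a,b} \<in> E)"
      have sS: "\<forall>a\<in>S. \<forall>b\<in>S. {a,b} \<notin> E" using S indep_iff[OF sg] by blast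
      have "E = {{x, y} | x y. x \<in> T \<and> y \<in> S}"
      proof
        show "E \<subseteq> {{x, y} | x y. x \<in> T \<and> y \<in> S}"
        proof
          fix e assume e: "e \<in> E"
          then obtain a b where ab: "e = {a,b}" "a \<in> V" "b \<in> V" using edge_form[OF sg] by blast
          show "e \<in> {{x, y} | x y. x \<in> T \<and> y \<in> S}"
          proof (cases "a \<in> S")
            case True
            then have "b \<in> T" using sS ab e by (auto simp: T_def)
            moreover have "e = {b,a}" using ab by (simp add: insert_commute)
            ultimately show ?thesis using True by blast
          next
            case False
            then have "a \<in> T" using ab by (simp add: T_def)
            then have "b \<in> S" using noT ab e by (auto simp: T_def)
            then show ?thesis using \<open>a \<in> T\<close> ab by blast
          qed
        qed
        show "{{x, y} | x y. x \<in> T \<and> y \<in> S} \<subseteq> E" using full by blast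
      qed
      then have "is_complete_bipartite V E d (n - d)"
        unfolding is_complete_bipartite_def
        by (intro exI[of _ T] exI[of _ S]) (use SV True nat in \<open>auto simp: T_def t_def \<alpha>_def\<close>)
      then show False using nbip by simp
    qed
    have TJ: "T \<notin> JJ" using edgeT indep_iff[OF sg] by (auto simp: JJ_def)
    have Tne: "T \<noteq> {}" using True d0 by (auto simp: t_def)
    have c1: "c J = 0" if "J \<in> JJ - {{}}" for J
    proof -
      have "J \<noteq> {}" using that by blast
      then obtain x where x: "x \<in> J" by blast
      have "x \<in> T" using that x by (auto simp: JJ_def)
      then have "S - nb E J = {}" using full x by (auto simp: nb_def)
      then show ?thesis unfolding c_def by (metis card.empty)
    qed
    have "(\<Sum>J\<in>JJ. (2::nat) ^ c J) = 2 ^ c {} + (\<Sum>J\<in>JJ - {{}}. 2 ^ c J)"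
      using sum.remove[OF fJJ eJJ] by simp
    also have "(\<Sum>J\<in>JJ - {{}}. (2::nat) ^ c J) = card (JJ - {{}})"
      using c1 by simp
    also have "card (JJ - {{}}) \<le> card (Pow T - {{}, T})"
      by (rule card_mono) (use fT JJP TJ in auto)
    also have "card (Pow T - {{}, T}) = 2 ^ d - 2"
      using card_Diff_subset[of "{{},T}" "Pow T"] fT Tne True by (simp add: card_Pow t_def)
    finally have "(\<Sum>J\<in>JJ. (2::nat) ^ c J) \<le> 2 ^ \<alpha> + (2 ^ d - 2)" using c0 by simp
    moreover have "(2::nat) \<le> 2 ^ d" using d0 by (simp add: self_le_power)
    moreover have "n - d = \<alpha>" using nd True by simp
    ultimately show ?thesis by simp
  next
    case False
    then have tgt: "d < t" using dt by simp
    show ?thesis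
    proof (cases "3^t * 2^d < (4::nat)^t")
      case True
      have trm: "2^t * 2^c J \<le> (2::nat)^\<alpha> * 2^(t - card J)" if J: "J \<in> JJ" for J
      proof -
        have "card J \<le> t" using J JJP fT card_mono unfolding t_def by blast
        then have "t + c J \<le> \<alpha> + (t - card J)" using JJsw[OF J] by simp
        then have "(2::nat)^(t + c J) \<le> 2^(\<alpha> + (t - card J))" by (rule power_increasing) simp
        then show ?thesis by (simp add: power_add)
      qed
      have "2^t * (\<Sum>J\<in>JJ. (2::nat) ^ c J) = (\<Sum>J\<in>JJ. 2^t * 2 ^ c J)"
        by (simp add: sum_distrib_left)
      also have "\<dots> \<le> (\<Sum>J\<in>JJ. 2^\<alpha> * 2^(t - card J))" by (rule sum_mono) (rule trm)
      also have "\<dots> \<le> (\<Sum>J\<in>Pow T. 2^\<alpha> * 2^(t - card J))"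
        by (rule sum_mono2) (use fT JJP in auto)
      also have "\<dots> = 2^\<alpha> * 3^t" using sum3[OF fT] by (simp add: sum_distrib_left[symmetric] t_def)
      finally have A: "2^t * (\<Sum>J\<in>JJ. (2::nat) ^ c J) \<le> 2^\<alpha> * 3^t" .
      have "2^t * (\<Sum>J\<in>JJ. (2::nat) ^ c J) * 2^d \<le> 2^\<alpha> * (3^t * 2^d)" using A by simp
      also have "\<dots> < 2^\<alpha> * 4^t" using True by simp
      also have "\<dots> = 2^t * 2^(n-d) * 2^d"
      proof -
        have "(4::nat)^t = 2^t * 2^t" by (simp add: power_mult_distrib[symmetric])
        moreover have "(2::nat)^(n-d) * 2^d = 2^\<alpha> * 2^t" using nd tgt
          by (simp add: power_add[symmetric])
        ultimately show ?thesis by (simp add: ac_simps)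
      qed
      finally have "(\<Sum>J\<in>JJ. (2::nat) ^ c J) < 2^(n-d)" by simp
      moreover have "(1::nat) \<le> 2^d" by simp
      ultimately show ?thesis by linarith
    next
      case False
      have t3: "t < 3 * d"
      proof (rule ccontr)
        assume "\<not> t < 3 * d"
        then obtain r where r: "t = r + 3 * d" by (metis add.commute le_add_diff_inverse not_less)
        have e54: "(54::nat)^d = 2^d * 3^(3*d)"
        proof -
          have "(54::nat)^d = (2*3^3)^d" by simp
          also have "\<dots> = 2^d*(3^3)^d" by (rule power_mult_distrib)
          also have "((3::nat)^3)^d = 3^(3*d)" by (simp only: power_mult)
          finally show ?thesis .
        qed
        have "(3::nat)^t * 2^d = 3^r * 54^d" unfolding r e54
          by (simp add: power_add ac_simps)
        also have "\<dots> < 4^r * 64^d"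
        proof -
          have "(3::nat)^r \<le> 4^r" by (rule power_mono) auto
          moreover have "(54::nat)^d < 64^d" using d0 by (intro power_strict_mono) auto
          moreover have "(0::nat) < 4^r" by simp
          ultimately show ?thesis
            by (meson le_less_trans mult_le_mono1 mult_less_mono2)
        qed
        also have "\<dots> = 4^t" unfolding r by (simp add: power_add power_mult)
        finally show False using False by simp
      qed
      have big: "t * (t + 1) < \<alpha>"
      proof -
        have "t * (t+1) \<le> (3*d) * (3*d)" using t3 by (intro mult_le_mono) auto
        moreover have "(3*d) * (3*d) = 9*d^2" by (simp add: power2_eq_square)
        ultimately show ?thesis using nat nN t3 by linarith
      qed
      define Tl where "Tl = {x\<in>T. \<alpha> < c {x} + (t + 2)}"
      define Th where "Th = T - Tl"
      have TlT: "Tl \<subseteq> T" by (auto simp: Tl_def)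
      have fTl: "finite Tl" using TlT fT finite_subset by blast
      have low: "card (S \<inter> nb E {x}) \<le> t + 1" if "x \<in> Tl" for x
      proof -
        have "c {x} = \<alpha> - card (S \<inter> nb E {x})" unfolding c_def \<alpha>_def
          by (rule card_Diff_subset_Int) (use fS in auto)
        moreover have "card (S \<inter> nb E {x}) \<le> \<alpha>" unfolding \<alpha>_def by (rule card_mono[OF fS]) auto
        moreover have "\<alpha> < c {x} + (t + 2)" using that by (simp add: Tl_def)
        ultimately show ?thesis by linarith
      qed
      define Sl where "Sl = (\<Union>x\<in>Tl. S \<inter> nb E {x})"
      have "card Sl \<le> (\<Sum>x\<in>Tl. card (S \<inter> nb E {x}))" unfolding Sl_def by (rule card_UN_le[OF fTl])
      also have "\<dots> \<le> card Tl * (t + 1)" using sum_bounded_above[of Tl "\<lambda>x. card (S \<inter> nb E {x})" "t+1"] low by simp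
      also have "\<dots> \<le> t * (t + 1)" using card_mono[OF fT TlT] unfolding t_def by (intro mult_le_mono1)
      finally have "card Sl < \<alpha>" using big by simp
      have "\<not> S \<subseteq> Sl"
      proof
        assume h: "S \<subseteq> Sl"
        have "Sl \<subseteq> S" by (auto simp: Sl_def)
        then have "finite Sl" using fS finite_subset by blast
        then have "card S \<le> card Sl" using card_mono h by blast
        then show False using \<open>card Sl < \<alpha>\<close> by (simp add: \<alpha>_def)
      qed
      then obtain s where s: "s \<in> S" "s \<notin> Sl" by blast
      have "{u. {u,s} \<in> E} \<subseteq> Th"
      proof
        fix u assume u: "u \<in> {u. {u,s} \<in> E}"
        then have "u \<in> T" using degS[OF s(1)] by blast
        moreover have "u \<notin> Tl"
        proof
          assume "u \<in> Tl"
          moreover have "s \<in> S \<inter> nb E {u}" using u s(1) by (auto simp: nb_def)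
          ultimately show False using s(2) by (auto simp: Sl_def)
        qed
        ultimately show "u \<in> Th" by (simp add: Th_def)
      qed
      then have "d \<le> card Th" using degS[OF s(1)] card_mono[of Th] fT
        by (metis Th_def finite_Diff le_trans)
      moreover have "card Th + card Tl = t" unfolding Th_def t_def
        using card_Diff_subset[OF fTl TlT] card_mono[OF fT TlT] by simp
      ultimately have cTl: "card Tl \<le> t - d" by simp
      define J1 where "J1 = {J\<in>JJ. J \<subseteq> Tl}"
      have J1JJ: "J1 \<subseteq> JJ" by (auto simp: J1_def)
      have fJ1: "finite J1" using fJJ J1JJ finite_subset by blast
      have eJ1: "{} \<in> J1" using eJJ by (simp add: J1_def)
      have split: "(\<Sum>J\<in>JJ. (2::nat) ^ c J) = (\<Sum>J\<in>JJ - J1. 2 ^ c J) + (\<Sum>J\<in>J1. 2 ^ c J)"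
        by (rule sum.subset_diff[OF J1JJ fJJ])
      have at: "t + 2 \<le> \<alpha>"
      proof -
        have "(t+1) * 2 \<le> (t+1) * t" using tgt d0 by (intro mult_le_mono2) linarith
        then show ?thesis using big by (simp add: mult.commute)
      qed
      have J2b: "(2::nat) ^ c J \<le> 2 ^ (\<alpha> - (t+2))" if J: "J \<in> JJ - J1" for J
      proof -
        obtain x where x: "x \<in> J" "x \<notin> Tl" using J by (auto simp: J1_def)
        have "x \<in> T" using J x by (auto simp: JJ_def)
        then have "c {x} + (t+2) \<le> \<alpha>" using x(2) by (auto simp: Tl_def)
        moreover have "c J \<le> c {x}" using x(1) by (intro cmono) auto
        ultimately show ?thesis by (intro power_increasing) auto
      qed
      have "(\<Sum>J\<in>JJ - J1. (2::nat) ^ c J) \<le> card (JJ - J1) * 2 ^ (\<alpha> - (t+2))"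
        using sum_bounded_above[of "JJ - J1" "\<lambda>J. (2::nat) ^ c J"] J2b by simp
      also have "\<dots> \<le> 2^t * 2 ^ (\<alpha> - (t+2))"
      proof -
        have "card (JJ - J1) \<le> card (Pow T)" by (rule card_mono) (use fT JJP in auto)
        then show ?thesis using fT by (simp add: card_Pow t_def)
      qed
      finally have S2: "4 * (\<Sum>J\<in>JJ - J1. (2::nat) ^ c J) \<le> 2^\<alpha>"
      proof -
        assume h: "(\<Sum>J\<in>JJ - J1. (2::nat) ^ c J) \<le> 2^t * 2 ^ (\<alpha> - (t+2))"
        have "(4::nat) * (2^t * 2 ^ (\<alpha> - (t+2))) = 2^(2 + t + (\<alpha> - (t+2)))"
          by (simp add: power_add)
        also have "2 + t + (\<alpha> - (t+2)) = \<alpha>" using at by simp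
        finally show ?thesis using h by simp
      qed
      have J1b: "(2::nat) ^ c J \<le> 2 ^ (\<alpha> - 1)" if J: "J \<in> J1 - {{}}" for J
      proof -
        have "J \<noteq> {}" using J by blast
        moreover have "finite J" using J J1JJ JJP fT finite_subset by blast
        ultimately have "1 \<le> card J" by (simp add: Suc_le_eq card_gt_0_iff)
        then have "c J \<le> \<alpha> - 1" using JJsw[of J] J J1JJ by auto
        then show ?thesis by (intro power_increasing) auto
      qed
      have "(\<Sum>J\<in>J1. (2::nat) ^ c J) = 2 ^ c {} + (\<Sum>J\<in>J1 - {{}}. 2 ^ c J)"
        using sum.remove[OF fJ1 eJ1] by simp
      also have "(\<Sum>J\<in>J1 - {{}}. (2::nat) ^ c J) \<le> card (J1 - {{}}) * 2 ^ (\<alpha> - 1)"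
        using sum_bounded_above[of "J1 - {{}}" "\<lambda>J. (2::nat) ^ c J"] J1b by simp
      also have "card (J1 - {{}}) \<le> 2 ^ (t - d) - 1"
      proof -
        have "card (J1 - {{}}) \<le> card (Pow Tl - {{}})" by (rule card_mono) (use fTl in \<open>auto simp: J1_def\<close>)
        also have "\<dots> = 2 ^ card Tl - 1" using fTl by (simp add: card_Pow)
        also have "\<dots> \<le> 2 ^ (t - d) - 1" using cTl by (intro diff_le_mono power_increasing) auto
        finally show ?thesis .
      qed
      finally have S1: "(\<Sum>J\<in>J1. (2::nat) ^ c J) \<le> 2^\<alpha> + (2 ^ (t - d) - 1) * 2 ^ (\<alpha> - 1)"
        using c0 by (simp add: mult_right_mono)
      obtain P where P: "2^\<alpha> = 2 * P" "P = (2::nat)^(\<alpha>-1)" using \<open>1 \<le> \<alpha>\<close>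
        by (metis Suc_diff_le diff_Suc_1 power_Suc)
      have "(2::nat)^1 \<le> 2 ^ (t - d)" using tgt by (intro power_increasing) auto
      then obtain q where q: "(2::nat) ^ (t - d) = q + 2"
        by (metis add.commute le_add_diff_inverse power_one_right)
      have Ppos: "0 < P" using P by simp
      have e: "(2::nat)^(n-d) = 2 * P * (q + 2)" using nd P q by (simp add: power_add)
      have "4 * (\<Sum>J\<in>JJ. (2::nat) ^ c J) \<le> 2*P + 4*(2*P + (q+1)*P)"
        using split S1 S2 P q by simp
      also have "\<dots> < 4 * (2 * P * (q + 2))" using Ppos by (simp add: algebra_simps)
      finally have "(\<Sum>J\<in>JJ. (2::nat) ^ c J) < 2^(n-d)" using e by simp
      moreover have "(1::nat) \<le> 2^d" by simp
      ultimately show ?thesis by linarith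
    qed
  qed

  show ?thesis using cnt main by linarith
qed


theorem mainTheorem4:
  fixes \<delta> :: nat
  assumes "\<delta> > 0"
  shows "\<exists>N. \<forall>n\<ge>N.
     (\<exists>E. simple_graph {0..<n} E \<and> min_degree_ge {0..<n} E \<delta> \<and>
          is_complete_bipartite {0..<n} E \<delta> (n - \<delta>)) \<and>
     (\<forall>E H. simple_graph {0..<n} E \<and> min_degree_ge {0..<n} E \<delta> \<and>
            simple_graph {0..<n} H \<and> min_degree_ge {0..<n} H \<delta> \<and>
            is_complete_bipartite {0..<n} H \<delta> (n - \<delta>) \<and>
            \<not> is_complete_bipartite {0..<n} E \<delta> (n - \<delta>)
        \<longrightarrow> num_indep_sets {0..<n} E < num_indep_sets {0..<n} H)"
proof (intro exI[of _ "9*\<delta>^2 + 3*\<delta> + 2"] allI impI conjI)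
  fix n assume n: "9*\<delta>^2 + 3*\<delta> + 2 \<le> n"
  show "\<exists>E. simple_graph {0..<n} E \<and> min_degree_ge {0..<n} E \<delta> \<and>
          is_complete_bipartite {0..<n} E \<delta> (n - \<delta>)"
    using bip_exists[OF assms] n by simp
  fix E H
  assume h: "simple_graph {0..<n} E \<and> min_degree_ge {0..<n} E \<delta> \<and>
            simple_graph {0..<n} H \<and> min_degree_ge {0..<n} H \<delta> \<and>
            is_complete_bipartite {0..<n} H \<delta> (n - \<delta>) \<and>
            \<not> is_complete_bipartite {0..<n} E \<delta> (n - \<delta>)"
  have "num_indep_sets {0..<n} E < 2^(n-\<delta>) + 2^\<delta> - 1"
    using key[of "{0..<n}" E \<delta> n] h assms n by simp
  also have "\<dots> \<le> num_indep_sets {0..<n} H"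
    using bip_lower[of "{0..<n}" H \<delta> "n - \<delta>"] h by simp
  finally show "num_indep_sets {0..<n} E < num_indep_sets {0..<n} H" .
qed

end
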